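(* Let $p>q>1$ be relatively prime integers. A sequence $\mathbf{x}=x_0x_1\cdots$ over a finite alphabet $A$ is $\frac pq$-automatic if and only if, for every $a\in A$, there exists a $\frac pq$-recognizable set $R_a$ such that $\{i\in\mathbb{N}: x_i=a\}=R_a\cap\mathbb{N}$.
   Context: $A_p=\{0,\ldots,p-1\}$; for $w=w_\ell\cdots w_0\in A_p^*$, $\mathrm{val}_{\frac pq}(w)=\sum_{i=0}^{\ell}\frac{w_i}{q}(\frac pq)^i$ (a rational number); $\mathrm{rep}_{\frac pq}(n)$ is the unique word not starting with $0$ of value $n$ ($\mathrm{rep}_{\frac pq}(0)=\varepsilon$). $\mathbf{x}$ is $\frac pq$-automatic if there is a deterministic finite automaton with output $(Q,q_0,A_p,\delta,\tau:Q\to A)$ with $x_n=\tau(\delta(q_0,\mathrm{rep}_{\frac pq}(n)))$ for all $n$. Let $N_{\frac pq}=\mathrm{val}_{\frac pq}(A_p^* )$. A subset $X\subseteq N_{\frac pq}$ is $\frac pq$-recognizable if there is a deterministic finite automaton over $A_p$ accepting a language $L$ with $\mathrm{val}_{\frac pq}(L)=X$. *)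

theory Defs
  imports Main "HOL.Rat"
begin

text \<open>Words over A_p are lists of naturals < p, written most significant digit first:
  the list [w_l, ..., w_0] represents w = w_l ... w_0.\<close>

definition alph :: "nat \<Rightarrow> nat set" where
  "alph p = {0..<p}"

definition val_pq :: "nat \<Rightarrow> nat \<Rightarrow> nat list \<Rightarrow> rat" where
  "val_pq p q w = (\<Sum>i<length w. (of_nat (rev w ! i) / of_nat q) * (of_nat p / of_nat q) ^ i)"

definition rep_pq :: "nat \<Rightarrow> nat \<Rightarrow> nat \<Rightarrow> nat list" where
  "rep_pq p q n = (THE w. set w \<subseteq> alph p \<and> (w = [] \<or> hd w \<noteq> 0) \<and> val_pq p q w = of_nat n)"

definition N_pq :: "nat \<Rightarrow> nat \<Rightarrow> rat set" where
  "N_pq p q = val_pq p q ` lists (alph p)"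

definition pq_automatic :: "nat \<Rightarrow> nat \<Rightarrow> 'a set \<Rightarrow> (nat \<Rightarrow> 'a) \<Rightarrow> bool" where
  "pq_automatic p q A x \<longleftrightarrow>
     (\<exists>(Q::nat set) q0 (\<delta>::nat \<Rightarrow> nat \<Rightarrow> nat) (\<tau>::nat \<Rightarrow> 'a).
        finite Q \<and> q0 \<in> Q \<and> (\<forall>s\<in>Q. \<forall>d\<in>alph p. \<delta> s d \<in> Q) \<and> (\<forall>s\<in>Q. \<tau> s \<in> A) \<and>
        (\<forall>n. x n = \<tau> (foldl \<delta> q0 (rep_pq p q n))))"

definition dfa_lang :: "nat \<Rightarrow> nat \<Rightarrow> (nat \<Rightarrow> nat \<Rightarrow> nat) \<Rightarrow> nat set \<Rightarrow> nat list set" where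
  "dfa_lang p q0 \<delta> F = {w \<in> lists (alph p). foldl \<delta> q0 w \<in> F}"

definition pq_recognizable :: "nat \<Rightarrow> nat \<Rightarrow> rat set \<Rightarrow> bool" where
  "pq_recognizable p q X \<longleftrightarrow> X \<subseteq> N_pq p q \<and>
     (\<exists>(Q::nat set) q0 (\<delta>::nat \<Rightarrow> nat \<Rightarrow> nat) F.
        finite Q \<and> q0 \<in> Q \<and> (\<forall>s\<in>Q. \<forall>d\<in>alph p. \<delta> s d \<in> Q) \<and> F \<subseteq> Q \<and>
        val_pq p q ` dfa_lang p q0 \<delta> F = X)"

end

theory Submission
  imports Defs "HOL-Library.FuncSet"
begin


definition stp :: "nat \<Rightarrow> nat \<Rightarrow> rat \<Rightarrow> nat \<Rightarrow> rat" where
  "stp p q v d = of_nat p / of_nat q * v + of_nat d / of_nat q"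

lemma val_snoc: "val_pq p q (w @ [d]) = of_nat p / of_nat q * val_pq p q w + of_nat d / of_nat q"
proof -
  have "val_pq p q (w @ [d]) = (\<Sum>i<Suc (length w). (of_nat ((d # rev w) ! i) / of_nat q) * (of_nat p / of_nat q) ^ i)"
    by (simp add: val_pq_def)
  also have "\<dots> = of_nat d / of_nat q + (\<Sum>i<length w. (of_nat (rev w ! i) / of_nat q) * (of_nat p / of_nat q) ^ Suc i)"
    by (subst sum.lessThan_Suc_shift) simp
  also have "\<dots> = of_nat p / of_nat q * val_pq p q w + of_nat d / of_nat q"
    by (simp add: val_pq_def sum_distrib_left mult_ac)
  finally show ?thesis .
qed

lemma val_Nil[simp]: "val_pq p q [] = 0" by (simp add: val_pq_def)

lemma val_foldl: "val_pq p q w = foldl (stp p q) 0 w"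
  by (induction w rule: rev_induct) (simp_all add: val_snoc stp_def)

lemma val_zero_Cons: "val_pq p q (0 # w) = val_pq p q w"
  by (simp add: val_foldl stp_def)

lemma val_replicate: "val_pq p q (replicate k 0 @ w) = val_pq p q w"
  by (induction k) (simp_all add: val_zero_Cons)

lemma foldl_stp_pos:
  assumes "p > 0" "q > 0"
  shows "v > 0 \<Longrightarrow> foldl (stp p q) v w > 0"
proof (induction w arbitrary: v)
  case Nil then show ?case by simp
next
  case (Cons d w)
  have "stp p q v d > 0" using Cons.prems assms
    by (simp add: stp_def add_pos_nonneg)
  then show ?case using Cons.IH by simp
qed

lemma val_pos:
  assumes "p > 0" "q > 0" "w \<noteq> []" "hd w \<noteq> 0"
  shows "val_pq p q w > 0"
proof -
  obtain d w' where w: "w = d # w'" using assms(3) by (cases w) auto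
  have "stp p q 0 d > 0" using assms w by (simp add: stp_def)
  then show ?thesis using foldl_stp_pos[OF assms(1,2)] w by (simp add: val_foldl)
qed

lemma val_num:
  assumes "q > 0"
  shows "\<exists>m::nat. val_pq p q w * of_nat q ^ length w = of_nat m"
proof (induction w rule: rev_induct)
  case Nil then show ?case by simp
next
  case (snoc d w)
  then obtain m where m: "val_pq p q w * of_nat q ^ length w = of_nat m" by blast
  have "val_pq p q (w @ [d]) * of_nat q ^ length (w @ [d])
      = of_nat p * (val_pq p q w * of_nat q ^ length w) + of_nat d * of_nat q ^ length w"
    using assms by (simp add: val_snoc field_simps)
  also have "\<dots> = of_nat (p * m + d * q ^ length w)" using m by simp
  finally show ?case by blast
qed

lemma int_prefix:
  assumes "coprime p q" "q > 0" "val_pq p q (w @ [d]) = of_nat N"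
  shows "\<exists>M. val_pq p q w = of_nat M \<and> q * N = p * M + d"
proof -
  define L where "L = length w"
  obtain m where m: "val_pq p q w * of_nat q ^ L = of_nat m" using val_num[OF assms(2)] L_def by blast
  have e1: "of_nat q * of_nat N = of_nat p * val_pq p q w + (of_nat d :: rat)"
    using assms(2,3) by (simp add: val_snoc field_simps)
  have "(of_nat (q ^ L * q * N) :: rat) = of_nat q ^ L * (of_nat q * of_nat N)" by simp
  also have "\<dots> = of_nat p * (val_pq p q w * of_nat q ^ L) + of_nat d * of_nat q ^ L"
    by (simp only: e1) (simp add: field_simps)
  also have "\<dots> = of_nat (p * m + d * q ^ L)" using m by simp
  finally have E: "q ^ L * q * N = p * m + d * q ^ L" by (simp only: of_nat_eq_iff)
  have "q ^ L dvd p * m + d * q ^ L" unfolding E[symmetric] by simp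
  then have "q ^ L dvd p * m" by (simp add: dvd_add_left_iff)
  moreover have "coprime (q ^ L) p" using assms(1) by (simp add: coprime_commute)
  ultimately have "q ^ L dvd m" using coprime_dvd_mult_right_iff by blast
  then obtain M where M: "m = q ^ L * M" by blast
  have qL: "(of_nat q :: rat) ^ L \<noteq> 0" using assms(2) by simp
  have "val_pq p q w = of_nat M"
    using m M qL assms(2) by (simp add: field_simps)
  moreover have "q * N = p * M + d"
  proof -
    have "q ^ L * (q * N) = q ^ L * (p * M + d)" using E M by (simp add: algebra_simps)
    then show ?thesis using assms(2) by simp
  qed
  ultimately show ?thesis by blast
qed

definition goodw :: "nat \<Rightarrow> nat \<Rightarrow> nat \<Rightarrow> nat list \<Rightarrow> bool" where
  "goodw p q n w \<longleftrightarrow> set w \<subseteq> alph p \<and> (w = [] \<or> hd w \<noteq> 0) \<and> val_pq p q w = of_nat n"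

lemma rep_exists:
  assumes "p > q" "q > 0"
  shows "\<exists>w. goodw p q N w"
proof (induction N rule: less_induct)
  case (less N)
  show ?case
  proof (cases "N = 0")
    case True then show ?thesis by (intro exI[of _ "[]"]) (simp add: goodw_def)
  next
    case False
    define d where "d = q*N mod p"
    define M where "M = q*N div p"
    have "q * N < N * p" using assms False by simp
    then have "M < N" unfolding M_def by (simp add: less_mult_imp_div_less)
    then obtain w' where w': "goodw p q M w'" using less.IH by blast
    have qN: "q*N = p*M + d" by (simp add: d_def M_def)
    have dp: "d < p" using assms unfolding d_def by simp
    have "val_pq p q (w' @ [d]) = (of_nat p * of_nat M + of_nat d) / of_nat q"
      using w' by (simp add: val_snoc goodw_def add_divide_distrib)
    also have "\<dots> = of_nat (q * N) / of_nat q" by (simp only: qN) simp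
    also have "\<dots> = of_nat N" using assms by simp
    finally have v: "val_pq p q (w' @ [d]) = of_nat N" .
    have hd: "hd (w' @ [d]) \<noteq> 0"
    proof (cases "w' = []")
      case True
      then have "M = 0" using w' by (simp add: goodw_def)
      then have "d = q * N" using qN by simp
      then show ?thesis using True False assms by simp
    next
      case False then show ?thesis using w' by (simp add: goodw_def)
    qed
    show ?thesis using v hd dp w' by (intro exI[of _ "w' @ [d]"]) (auto simp: goodw_def alph_def)
  qed
qed

lemma rep_unique:
  assumes "coprime p q" "p > q" "q > 0"
  shows "goodw p q N u \<Longrightarrow> goodw p q N v \<Longrightarrow> u = v"
proof (induction u arbitrary: v N rule: rev_induct)
  case Nil
  then have N: "N = 0" by (simp add: goodw_def)
  show ?case
  proof (rule ccontr)
    assume "[] \<noteq> v"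
    then have "val_pq p q v > 0" using Nil.prems val_pos[of p q v] assms by (auto simp: goodw_def)
    then show False using Nil.prems N by (simp add: goodw_def)
  qed
next
  case (snoc d u)
  have "val_pq p q (u @ [d]) > 0" using snoc.prems val_pos[of p q "u @ [d]"] assms by (auto simp: goodw_def)
  then have "N \<noteq> 0" using snoc.prems by (auto simp: goodw_def)
  then have "v \<noteq> []" using snoc.prems by (auto simp: goodw_def)
  then obtain v' e where v: "v = v' @ [e]" by (metis rev_exhaust)
  have vu: "val_pq p q (u @ [d]) = of_nat N" using snoc.prems by (simp add: goodw_def)
  have vv: "val_pq p q (v' @ [e]) = of_nat N" using snoc.prems v by (simp add: goodw_def)
  obtain M where M: "val_pq p q u = of_nat M" "q * N = p * M + d"
    using int_prefix[OF assms(1,3) vu] by blast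
  obtain M' where M': "val_pq p q v' = of_nat M'" "q * N = p * M' + e"
    using int_prefix[OF assms(1,3) vv] by blast
  have "d < p" "e < p" using snoc.prems v by (auto simp: goodw_def alph_def)
  then have de: "d = e" "M = M'" using M(2) M'(2)
    by (metis add.commute mod_mult_self2 mod_less mult.commute,
        metis add.commute div_mult_self2 div_less add_0 mult.commute less_not_refl3 gr_implies_not0 )
  have "hd (u @ [d]) \<noteq> 0" using snoc.prems by (simp add: goodw_def)
  then have "u = [] \<or> hd u \<noteq> 0" by (cases u) auto
  then have gu: "goodw p q M u" using snoc.prems M(1) by (auto simp: goodw_def)
  have "hd (v' @ [e]) \<noteq> 0" using snoc.prems v by (simp add: goodw_def)
  then have "v' = [] \<or> hd v' \<noteq> 0" by (cases v') auto
  then have gv: "goodw p q M v'" using snoc.prems M'(1) v de by (auto simp: goodw_def)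
  show ?case using snoc.IH[OF gu gv] v de by simp
qed



locale pqsys =
  fixes p q :: nat
  assumes pq: "p > q" and q0: "q > 0" and cop: "coprime p q"
begin

lemma ex1: "\<exists>!w. goodw p q n w"
  using rep_exists[OF pq q0] rep_unique[OF cop pq q0] by blast

lemma rep_good: "goodw p q n (rep_pq p q n)"
  unfolding rep_pq_def using theI'[OF ex1[of n]] by (simp add: goodw_def)

lemma rep_eq: "goodw p q n w \<Longrightarrow> w = rep_pq p q n"
  using rep_good rep_unique[OF cop pq q0] by blast

lemma rep_alph: "rep_pq p q n \<in> lists (alph p)"
  using rep_good by (auto simp: goodw_def)

lemma rep_val: "val_pq p q (rep_pq p q n) = of_nat n"
  using rep_good by (auto simp: goodw_def)

lemma strip: "u \<in> lists (alph p) \<Longrightarrow> val_pq p q u = of_nat n \<Longrightarrow> \<exists>k. u = replicate k 0 @ rep_pq p q n"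
proof (induction u)
  case Nil
  then have "goodw p q n []" by (simp add: goodw_def)
  then show ?case using rep_eq by (intro exI[of _ 0]) simp
next
  case (Cons d u)
  show ?case
  proof (cases "d = 0")
    case True
    then obtain k where "u = replicate k 0 @ rep_pq p q n" using Cons by (auto simp add: val_zero_Cons)
    then show ?thesis using True by (intro exI[of _ "Suc k"]) simp
  next
    case False
    then have "goodw p q n (d # u)" using Cons.prems by (auto simp: goodw_def)
    then show ?thesis using rep_eq by (intro exI[of _ 0]) simp
  qed
qed

end

lemma foldl_closed:
  assumes "\<forall>s\<in>Q. \<forall>d\<in>alph p. \<delta> s d \<in> Q"
  shows "s \<in> Q \<Longrightarrow> w \<in> lists (alph p) \<Longrightarrow> foldl \<delta> s w \<in> Q"
  using assms by (induction w arbitrary: s) auto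

lemma automatic_general:
  fixes Q :: "'s set" and \<delta> :: "'s \<Rightarrow> nat \<Rightarrow> 's" and \<tau> :: "'s \<Rightarrow> 'a"
  assumes "finite Q" "sI \<in> Q" "\<forall>s\<in>Q. \<forall>d\<in>alph p. \<delta> s d \<in> Q" "\<forall>s\<in>Q. \<tau> s \<in> A"
    "\<forall>n. x n = \<tau> (foldl \<delta> sI (rep_pq p q n))" "\<forall>n. rep_pq p q n \<in> lists (alph p)"
  shows "pq_automatic p q A x"
proof -
  obtain f :: "'s \<Rightarrow> nat" and N where f: "f ` Q = {i. i < N}" "inj_on f Q"
    using finite_imp_inj_to_nat_seg[OF assms(1)] by blast
  define g where "g = inv_into Q f"
  have gf: "s \<in> Q \<Longrightarrow> g (f s) = s" for s using f(2) by (simp add: g_def)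
  define \<delta>' where "\<delta>' m d = f (\<delta> (g m) d)" for m d
  define \<tau>' where "\<tau>' m = \<tau> (g m)" for m
  have run: "s \<in> Q \<Longrightarrow> w \<in> lists (alph p) \<Longrightarrow> foldl \<delta>' (f s) w = f (foldl \<delta> s w)" for s w
  proof (induction w arbitrary: s)
    case Nil then show ?case by simp
  next
    case (Cons d w)
    have "\<delta>' (f s) d = f (\<delta> s d)" using Cons.prems gf by (simp add: \<delta>'_def)
    then show ?case using Cons assms(3) by simp
  qed
  show ?thesis unfolding pq_automatic_def
  proof (intro exI conjI)
    show "finite (f ` Q)" using assms(1) by simp
    show "f sI \<in> f ` Q" using assms(2) by simp
    show "\<forall>s\<in>f ` Q. \<forall>d\<in>alph p. \<delta>' s d \<in> f ` Q" using gf assms(3) by (auto simp: \<delta>'_def)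
    show "\<forall>s\<in>f ` Q. \<tau>' s \<in> A" using gf assms(4) by (auto simp: \<tau>'_def)
    show "\<forall>n. x n = \<tau>' (foldl \<delta>' (f sI) (rep_pq p q n))"
      using run[OF assms(2) assms(6)[rule_format]] gf foldl_closed[OF assms(3) assms(2) assms(6)[rule_format]] assms(5)
      by (simp add: \<tau>'_def)
  qed
qed



lemma dir1:
  assumes P: "pqsys p q" and aut: "pq_automatic p q A x" and aA: "a \<in> A"
  shows "\<exists>R. pq_recognizable p q R \<and> of_nat ` {i. x i = a} = R \<inter> (\<nat> :: rat set)"
proof -
  interpret pqsys p q by (rule P)
  obtain Q s0 \<delta> \<tau> where A: "finite (Q::nat set)" "s0 \<in> Q" "\<forall>s\<in>Q. \<forall>d\<in>alph p. \<delta> s d \<in> Q"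
    "\<forall>s\<in>Q. \<tau> s \<in> A" "\<forall>n. x n = \<tau> (foldl \<delta> s0 (rep_pq p q n))"
    using aut unfolding pq_automatic_def by blast
  define \<delta>' where "\<delta>' s d = (if s = 0 then (if d = 0 then 1 else \<delta> s0 d + 2)
      else if s = 1 then 1 else \<delta> (s - 2) d + 2)" for s d :: nat
  define Q' where "Q' = {0, 1} \<union> (\<lambda>s. s + 2) ` Q"
  define F where "F = (\<lambda>s. s + 2) ` {s\<in>Q. \<tau> s = a} \<union> (if \<tau> s0 = a then {0} else {})"
  define L where "L = dfa_lang p 0 \<delta>' F"
  have f1: "foldl \<delta>' 1 w = 1" for w by (induction w) (auto simp: \<delta>'_def)
  have f2: "foldl \<delta>' (s + 2) w = foldl \<delta> s w + 2" for s w
    by (induction w arbitrary: s) (auto simp: \<delta>'_def)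
  have key: "w \<in> lists (alph p) \<Longrightarrow> (foldl \<delta>' 0 w \<in> F \<longleftrightarrow> (w = [] \<or> hd w \<noteq> 0) \<and> \<tau> (foldl \<delta> s0 w) = a)" for w
  proof (cases w)
    case Nil then show ?thesis by (auto simp: F_def)
  next
    case (Cons d w')
    assume wl: "w \<in> lists (alph p)"
    show ?thesis
    proof (cases "d = 0")
      case True then show ?thesis using Cons f1 by (auto simp: F_def \<delta>'_def)
    next
      case False
      have "foldl \<delta>' 0 w = foldl \<delta> s0 w + 2" using Cons False f2 by (simp add: \<delta>'_def)
      moreover have "foldl \<delta> s0 w \<in> Q" using foldl_closed[OF A(3) A(2) wl] .
      ultimately show ?thesis using Cons False by (auto simp: F_def)
    qed
  qed
  have rec: "pq_recognizable p q (val_pq p q ` L)"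
    unfolding pq_recognizable_def
  proof (intro conjI exI)
    show "val_pq p q ` L \<subseteq> N_pq p q" by (auto simp: L_def dfa_lang_def N_pq_def)
    show "finite Q'" using A(1) by (simp add: Q'_def)
    show "(0::nat) \<in> Q'" by (simp add: Q'_def)
    show "\<forall>s\<in>Q'. \<forall>d\<in>alph p. \<delta>' s d \<in> Q'" using A(2,3) by (auto simp: Q'_def \<delta>'_def)
    show "F \<subseteq> Q'" using A(2) by (auto simp: Q'_def F_def)
    show "val_pq p q ` dfa_lang p 0 \<delta>' F = val_pq p q ` L" by (simp add: L_def)
  qed
  have eq: "of_nat ` {i. x i = a} = val_pq p q ` L \<inter> (\<nat> :: rat set)"
  proof
    show "of_nat ` {i. x i = a} \<subseteq> val_pq p q ` L \<inter> \<nat>"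
    proof
      fix r assume "r \<in> (of_nat ` {i. x i = a} :: rat set)"
      then obtain i where i: "r = of_nat i" "x i = a" by blast
      have "rep_pq p q i \<in> L" using key[OF rep_alph] rep_good i A(5) rep_alph
        by (auto simp: L_def dfa_lang_def goodw_def)
      then show "r \<in> val_pq p q ` L \<inter> \<nat>" using i rep_val by (auto intro!: image_eqI)
    qed
  next
    show "val_pq p q ` L \<inter> \<nat> \<subseteq> of_nat ` {i. x i = a}"
    proof
      fix r assume r: "r \<in> val_pq p q ` L \<inter> (\<nat> :: rat set)"
      then obtain w n where w: "w \<in> L" "r = val_pq p q w" "r = of_nat n"
        by (auto elim!: Nats_cases)
      have wl: "w \<in> lists (alph p)" and wF: "foldl \<delta>' 0 w \<in> F" using w by (auto simp: L_def dfa_lang_def)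
      have "goodw p q n w" using key[OF wl] wF wl w by (auto simp: goodw_def)
      then have "w = rep_pq p q n" by (rule rep_eq)
      then have "x n = a" using key[OF wl] wF A(5) by auto
      then show "r \<in> of_nat ` {i. x i = a}" using w(3) by blast
    qed
  qed
  show ?thesis using rec eq by blast
qed



lemma dir2:
  assumes P: "pqsys p q" and fA: "finite A" and xA: "\<forall>n. x n \<in> A"
    and H: "\<forall>a\<in>A. \<exists>R. pq_recognizable p q R \<and> of_nat ` {i. x i = a} = R \<inter> (\<nat> :: rat set)"
  shows "pq_automatic p q A x"
proof -
  interpret pqsys p q by (rule P)
  have p0: "0 \<in> alph p" using pq by (simp add: alph_def)
  have "\<forall>a\<in>A. \<exists>Q s0 \<delta> F. finite (Q::nat set) \<and> s0 \<in> Q \<and> (\<forall>s\<in>Q. \<forall>d\<in>alph p. \<delta> s d \<in> Q) \<and> F \<subseteq> Q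
     \<and> of_nat ` {i. x i = a} = val_pq p q ` dfa_lang p s0 \<delta> F \<inter> (\<nat> :: rat set)"
    using H unfolding pq_recognizable_def by metis
  then obtain Qf s0f \<delta>f Ff where D: "\<forall>a\<in>A. finite (Qf a :: nat set) \<and> s0f a \<in> Qf a \<and>
     (\<forall>s\<in>Qf a. \<forall>d\<in>alph p. \<delta>f a s d \<in> Qf a) \<and> Ff a \<subseteq> Qf a
     \<and> of_nat ` {i. x i = a} = val_pq p q ` dfa_lang p (s0f a) (\<delta>f a) (Ff a) \<inter> (\<nat> :: rat set)"
    by metis
  have keyx: "x n = a \<longleftrightarrow> (\<exists>k. foldl (\<delta>f a) (s0f a) (replicate k 0 @ rep_pq p q n) \<in> Ff a)"
    if aA: "a \<in> A" for a n
  proof -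
    have "x n = a \<longleftrightarrow> (of_nat n :: rat) \<in> of_nat ` {i. x i = a}"
      by (auto simp: image_iff)
    also have "\<dots> \<longleftrightarrow> (of_nat n :: rat) \<in> val_pq p q ` dfa_lang p (s0f a) (\<delta>f a) (Ff a)"
      using D aA by auto
    also have "\<dots> \<longleftrightarrow> (\<exists>k. foldl (\<delta>f a) (s0f a) (replicate k 0 @ rep_pq p q n) \<in> Ff a)"
    proof
      assume "(of_nat n :: rat) \<in> val_pq p q ` dfa_lang p (s0f a) (\<delta>f a) (Ff a)"
      then obtain u where u: "u \<in> lists (alph p)" "foldl (\<delta>f a) (s0f a) u \<in> Ff a" "val_pq p q u = of_nat n"
        unfolding dfa_lang_def by (auto simp: lists_eq_set)
      then show "\<exists>k. foldl (\<delta>f a) (s0f a) (replicate k 0 @ rep_pq p q n) \<in> Ff a"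
        using strip by metis
    next
      assume "\<exists>k. foldl (\<delta>f a) (s0f a) (replicate k 0 @ rep_pq p q n) \<in> Ff a"
      then obtain k where k: "foldl (\<delta>f a) (s0f a) (replicate k 0 @ rep_pq p q n) \<in> Ff a" by blast
      have "replicate k 0 @ rep_pq p q n \<in> dfa_lang p (s0f a) (\<delta>f a) (Ff a)"
        using k rep_alph p0 by (auto simp: dfa_lang_def)
      moreover have "val_pq p q (replicate k 0 @ rep_pq p q n) = of_nat n"
        by (simp add: val_replicate rep_val)
      ultimately show "(of_nat n :: rat) \<in> val_pq p q ` dfa_lang p (s0f a) (\<delta>f a) (Ff a)"
        by (metis image_eqI)
    qed
    finally show ?thesis .
  qed
  define Q' where "Q' = (\<Pi>\<^sub>E a\<in>A. Pow (Qf a))"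
  define S0 where "S0 = (\<lambda>a\<in>A. {foldl (\<delta>f a) (s0f a) (replicate k 0) | k. True})"
  define \<Delta> where "\<Delta> S d = (\<lambda>a\<in>A. (\<lambda>s. \<delta>f a s d) ` S a)" for S :: "'a \<Rightarrow> nat set" and d
  define \<tau> where "\<tau> S = (if \<exists>a\<in>A. S a \<inter> Ff a \<noteq> {} then (SOME a. a \<in> A \<and> S a \<inter> Ff a \<noteq> {}) else x 0)"
    for S :: "'a \<Rightarrow> nat set"
  have run: "w \<in> lists (alph p) \<Longrightarrow> foldl \<Delta> S0 w = (\<lambda>a\<in>A. {foldl (\<delta>f a) (s0f a) (replicate k 0 @ w) | k. True})" for w
  proof (induction w rule: rev_induct)
    case Nil then show ?case by (simp add: S0_def)
  next
    case (snoc d w)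
    then show ?case by (simp add: \<Delta>_def) (rule ext, auto)
  qed
  show ?thesis
  proof (rule automatic_general[where \<delta> = \<Delta> and \<tau> = \<tau> and sI = S0 and Q = Q'])
    show "finite Q'" unfolding Q'_def using fA D by (intro finite_PiE) auto
    have "foldl (\<delta>f a) (s0f a) (replicate k 0) \<in> Qf a" if "a \<in> A" for a k
    proof -
      have "replicate k 0 \<in> lists (alph p)" using p0 by (induction k) auto
      then show ?thesis using D that foldl_closed[of "Qf a" p "\<delta>f a" "s0f a" "replicate k 0"] by auto
    qed
    then show "S0 \<in> Q'" unfolding Q'_def S0_def by auto
    show "\<forall>S\<in>Q'. \<forall>d\<in>alph p. \<Delta> S d \<in> Q'"
    proof (intro ballI)
      fix S d assume S: "S \<in> Q'" and d: "d \<in> alph p"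
      have "(\<lambda>s. \<delta>f a s d) ` S a \<subseteq> Qf a" if "a \<in> A" for a
      proof -
        have "S a \<subseteq> Qf a" using S that unfolding Q'_def by blast
        moreover have "\<forall>s\<in>Qf a. \<delta>f a s d \<in> Qf a" using D that d by blast
        ultimately show ?thesis by blast
      qed
      then show "\<Delta> S d \<in> Q'" unfolding Q'_def \<Delta>_def by (simp add: restrict_PiE_iff)
    qed
    show "\<forall>S\<in>Q'. \<tau> S \<in> A"
    proof
      fix S
      show "\<tau> S \<in> A"
      proof (cases "\<exists>a\<in>A. S a \<inter> Ff a \<noteq> {}")
        case True
        then have "\<exists>a. a \<in> A \<and> S a \<inter> Ff a \<noteq> {}" by blast
        from someI_ex[OF this] True show ?thesis unfolding \<tau>_def by simp
      next
        case False then show ?thesis unfolding \<tau>_def using xA by simp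
      qed
    qed
    show "\<forall>n. rep_pq p q n \<in> lists (alph p)" using rep_alph by blast
    show "\<forall>n. x n = \<tau> (foldl \<Delta> S0 (rep_pq p q n))"
    proof
      fix n
      define S where "S = foldl \<Delta> S0 (rep_pq p q n)"
      have S: "S a \<inter> Ff a \<noteq> {} \<longleftrightarrow> x n = a" if aA: "a \<in> A" for a
      proof -
        have "S a = {foldl (\<delta>f a) (s0f a) (replicate k 0 @ rep_pq p q n) | k. True}"
          unfolding S_def run[OF rep_alph] using aA by simp
        then have "S a \<inter> Ff a \<noteq> {} \<longleftrightarrow> (\<exists>k. foldl (\<delta>f a) (s0f a) (replicate k 0 @ rep_pq p q n) \<in> Ff a)"
          by auto
        then show ?thesis using keyx[OF aA] by simp
      qed
      have ex: "\<exists>a\<in>A. S a \<inter> Ff a \<noteq> {}" using S xA by blast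
      have "(SOME a. a \<in> A \<and> S a \<inter> Ff a \<noteq> {}) = x n"
        by (rule some_equality) (use S xA in blast)+
      then have "\<tau> S = x n" unfolding \<tau>_def using ex by simp
      then show "x n = \<tau> (foldl \<Delta> S0 (rep_pq p q n))" by (simp add: S_def)
    qed
  qed
qed


theorem mainTheorem13:
  fixes p q :: nat and A :: "'a set" and x :: "nat \<Rightarrow> 'a"
  assumes "p > q" and "q > 1" and "coprime p q"
    and "finite A" and "\<forall>n. x n \<in> A"
  shows "pq_automatic p q A x \<longleftrightarrow>
    (\<forall>a\<in>A. \<exists>R. pq_recognizable p q R \<and> of_nat ` {i. x i = a} = R \<inter> (\<nat> :: rat set))"
proof -
  have P: "pqsys p q" using assms by unfold_locales auto
  show ?thesis
  proof
    assume "pq_automatic p q A x"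
    show "\<forall>a\<in>A. \<exists>R. pq_recognizable p q R \<and> of_nat ` {i. x i = a} = R \<inter> (\<nat> :: rat set)"
    proof
      fix a assume "a \<in> A"
      then show "\<exists>R. pq_recognizable p q R \<and> of_nat ` {i. x i = a} = R \<inter> (\<nat> :: rat set)"
        by (rule dir1[OF P \<open>pq_automatic p q A x\<close>])
    qed
  next
    assume "\<forall>a\<in>A. \<exists>R. pq_recognizable p q R \<and> of_nat ` {i. x i = a} = R \<inter> (\<nat> :: rat set)"
    then show "pq_automatic p q A x" by (rule dir2[OF P assms(4,5)])
  qed
qed

end
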